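(* Let $L$ be a finite distributive lattice and $x\in L$ a complemented element with complement $x'$. Then $\mathcal C_x(\mathcal J(L))$ is a convex polytope in $\mathbb R^{\mathcal J(L)}$ whose set of vertices (extreme points) is exactly $\mathcal D_x(\mathcal J(L))$.
   Context: $\mathcal J(L)$ is the set of join-irreducible elements of $L$ (elements covering exactly one element) with the induced order; for $y\in L$, $\eta(y):=\{j\in\mathcal J(L): j\le y\}$. Since $x$ is complemented, $\eta(x)$ and $\eta(x')$ partition $\mathcal J(L)$. A map $g$ on $\mathcal J(L)$ is nonincreasing if $j\le j'$ implies $g(j)\ge g(j')$. $\mathcal D_x(\mathcal J(L))$ is the set of maps $\xi:\mathcal J(L)\to\{-1,0,1\}$ such that $|\xi|$ is nonincreasing, $\xi(j)\ge0$ for $j\in\eta(x)$ and $\xi(j)\le0$ for $j\in\eta(x')$. $\mathcal C_x(\mathcal J(L))$ is the set of maps $f:\mathcal J(L)\to[-1,1]$ such that $|f|$ is nonincreasing, $f(j)\ge0$ for $j\in\eta(x)$ and $f(j)\le 0$ for $j\in\eta(x')$. *)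

theory Defs
  imports "HOL-Analysis.Analysis"
begin

definition covers :: "'a::order \<Rightarrow> 'a \<Rightarrow> bool" where
  "covers y j \<longleftrightarrow> y < j \<and> \<not> (\<exists>z. y < z \<and> z < j)"

definition JI :: "'a::order set" where
  "JI = {j. \<exists>!y. covers y j}"

definition eta :: "'a::order \<Rightarrow> 'a set" where
  "eta y = {j \<in> JI. j \<le> y}"

definition nonincr_on_JI :: "('a::order \<Rightarrow> real) \<Rightarrow> bool" where
  "nonincr_on_JI g \<longleftrightarrow> (\<forall>j\<in>JI. \<forall>j'\<in>JI. j \<le> j' \<longrightarrow> g j \<ge> g j')"

text \<open>The space R^{J(L)} is realised as the coordinate subspace of
  real^'a of vectors vanishing outside JI.\<close>
definition Cx :: "'a::{order,finite} \<Rightarrow> 'a \<Rightarrow> (real, 'a) vec set" where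
  "Cx x x' = {f. (\<forall>j. j \<notin> JI \<longrightarrow> f $ j = 0)
      \<and> (\<forall>j\<in>JI. -1 \<le> f $ j \<and> f $ j \<le> 1)
      \<and> nonincr_on_JI (\<lambda>j. \<bar>f $ j\<bar>)
      \<and> (\<forall>j\<in>eta x. f $ j \<ge> 0)
      \<and> (\<forall>j\<in>eta x'. f $ j \<le> 0)}"

definition Dx :: "'a::{order,finite} \<Rightarrow> 'a \<Rightarrow> (real, 'a) vec set" where
  "Dx x x' = {f. (\<forall>j. j \<notin> JI \<longrightarrow> f $ j = 0)
      \<and> (\<forall>j\<in>JI. f $ j \<in> {-1, 0, 1})
      \<and> nonincr_on_JI (\<lambda>j. \<bar>f $ j\<bar>)
      \<and> (\<forall>j\<in>eta x. f $ j \<ge> 0)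
      \<and> (\<forall>j\<in>eta x'. f $ j \<le> 0)}"

end

theory Submission
  imports Defs
begin

lemma lower_cover:
  fixes a j :: "'a::{finite,order}"
  assumes "a < j"
  shows "\<exists>y. covers y j \<and> a \<le> y"
proof -
  let ?A = "{z. a \<le> z \<and> z < j}"
  have "finite ?A" by simp
  moreover have "a \<in> ?A" using assms by simp
  ultimately obtain m where m: "m \<in> ?A" "a \<le> m" "\<forall>b\<in>?A. m \<le> b \<longrightarrow> m = b"
    using finite_has_maximal2 by blast
  have "covers m j"
    unfolding covers_def
  proof (intro conjI notI)
    show "m < j" using m by simp
  next
    assume "\<exists>z. m < z \<and> z < j"
    then obtain z where "m < z" "z < j" by blast
    then have "z \<in> ?A" using m by auto
    then show False using m \<open>m < z\<close> by auto
  qed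
  then show ?thesis using m by blast
qed

lemma JI_split:
  fixes j a b :: "'a::{finite,distrib_lattice}"
  assumes "j \<in> JI" "j \<le> sup a b"
  shows "j \<le> a \<or> j \<le> b"
proof (rule ccontr)
  assume n: "\<not> (j \<le> a \<or> j \<le> b)"
  have eq: "j = sup (inf j a) (inf j b)"
    using assms(2) by (metis inf.absorb1 inf_sup_distrib1)
  have l1: "inf j a < j" using n by (metis inf.absorb_iff1 inf.cobounded2 inf_le1 order.not_eq_order_implies_strict)
  have l2: "inf j b < j" using n by (metis inf.absorb_iff1 inf.cobounded2 inf_le1 order.not_eq_order_implies_strict)
  obtain y1 where y1: "covers y1 j" "inf j a \<le> y1" using lower_cover[OF l1] by blast
  obtain y2 where y2: "covers y2 j" "inf j b \<le> y2" using lower_cover[OF l2] by blast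
  have "y1 = y2" using assms(1) y1 y2 unfolding JI_def by blast
  then have "sup (inf j a) (inf j b) \<le> y1" using y1 y2 by simp
  moreover have "y1 < j" using y1 unfolding covers_def by simp
  ultimately show False using eq by simp
qed

lemma JI_nonbot:
  fixes j :: "'a::{order_bot}"
  assumes "j \<in> JI" shows "j \<noteq> bot"
proof
  assume "j = bot"
  from assms obtain y where "covers y j" unfolding JI_def by blast
  then show False using \<open>j = bot\<close> unfolding covers_def by simp
qed

lemma JI_parts:
  fixes x x' :: "'a::{finite, distrib_lattice, bounded_lattice}"
  assumes "inf x x' = bot" and "sup x x' = top" and "j \<in> JI"
  shows "(j \<in> eta x \<and> j \<notin> eta x') \<or> (j \<in> eta x' \<and> j \<notin> eta x)"
proof -
  have "j \<le> x \<or> j \<le> x'" using JI_split[OF assms(3), of x x'] assms(2) by simp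
  moreover have "\<not> (j \<le> x \<and> j \<le> x')"
  proof
    assume "j \<le> x \<and> j \<le> x'"
    then have "j \<le> inf x x'" by simp
    then show False using assms(1) JI_nonbot[OF assms(3)] bot.extremum_uniqueI by auto
  qed
  ultimately show ?thesis using assms(3) unfolding eta_def by auto
qed

lemma abs_comb:
  fixes a b u v :: real
  assumes "u \<ge> 0" "v \<ge> 0" "(a \<ge> 0 \<and> b \<ge> 0) \<or> (a \<le> 0 \<and> b \<le> 0)"
  shows "\<bar>u * a + v * b\<bar> = u * \<bar>a\<bar> + v * \<bar>b\<bar>"
proof -
  from assms(3) show ?thesis
  proof
    assume "a \<ge> 0 \<and> b \<ge> 0"
    then show ?thesis using assms(1,2) by simp
  next
    assume h: "a \<le> 0 \<and> b \<le> 0"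
    then have "u * a \<le> 0" "v * b \<le> 0" using assms(1,2) by (auto simp: mult_nonneg_nonpos)
    then show ?thesis using h assms(1,2) by (simp add: abs_of_nonpos)
  qed
qed

lemma Cx_convex:
  fixes x x' :: "'a::{finite, distrib_lattice, bounded_lattice}"
  assumes "inf x x' = bot" and "sup x x' = top"
  shows "convex (Cx x x')"
  unfolding convex_def
proof (intro ballI allI impI)
  fix f g :: "(real, 'a) vec" and u v :: real
  assume f: "f \<in> Cx x x'" and g: "g \<in> Cx x x'" and uv: "0 \<le> u" "0 \<le> v" "u + v = 1"
  let ?h = "u *\<^sub>R f + v *\<^sub>R g"
  have hj: "?h $ j = u * f $ j + v * g $ j" for j by simp
  have absh: "\<bar>?h $ j\<bar> = u * \<bar>f $ j\<bar> + v * \<bar>g $ j\<bar>" if "j \<in> JI" for j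
  proof -
    have "(f $ j \<ge> 0 \<and> g $ j \<ge> 0) \<or> (f $ j \<le> 0 \<and> g $ j \<le> 0)"
      using JI_parts[OF assms that] f g unfolding Cx_def by auto
    then show ?thesis unfolding hj by (rule abs_comb[OF uv(1,2)])
  qed
  have b1: "-1 \<le> ?h $ j \<and> ?h $ j \<le> 1" if "j \<in> JI" for j
  proof -
    have "\<bar>f $ j\<bar> \<le> 1" "\<bar>g $ j\<bar> \<le> 1" using f g that unfolding Cx_def by auto
    then have "u * \<bar>f $ j\<bar> + v * \<bar>g $ j\<bar> \<le> u * 1 + v * 1"
      using uv by (intro add_mono mult_left_mono) auto
    then show ?thesis using absh[OF that] uv by auto
  qed
  have mono: "nonincr_on_JI (\<lambda>j. \<bar>?h $ j\<bar>)"
    unfolding nonincr_on_JI_def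
  proof (intro ballI impI)
    fix j j' :: 'a assume jj: "j \<in> JI" "j' \<in> JI" "j \<le> j'"
    have "\<bar>f $ j'\<bar> \<le> \<bar>f $ j\<bar>" "\<bar>g $ j'\<bar> \<le> \<bar>g $ j\<bar>"
      using f g jj unfolding Cx_def nonincr_on_JI_def by auto
    then have "u * \<bar>f $ j'\<bar> + v * \<bar>g $ j'\<bar> \<le> u * \<bar>f $ j\<bar> + v * \<bar>g $ j\<bar>"
      using uv by (intro add_mono mult_left_mono) auto
    then show "\<bar>?h $ j'\<bar> \<le> \<bar>?h $ j\<bar>" using absh jj by simp
  qed
  have s1: "?h $ j \<ge> 0" if "j \<in> eta x" for j
  proof -
    have "f $ j \<ge> 0" "g $ j \<ge> 0" using f g that unfolding Cx_def by auto
    then show ?thesis using uv by simp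
  qed
  have s2: "?h $ j \<le> 0" if "j \<in> eta x'" for j
  proof -
    have "f $ j \<le> 0" "g $ j \<le> 0" using f g that unfolding Cx_def by auto
    then have "u * f $ j \<le> 0" "v * g $ j \<le> 0" using uv by (auto simp: mult_nonneg_nonpos)
    then show ?thesis by simp
  qed
  show "?h \<in> Cx x x'"
    unfolding Cx_def
    using f g uv b1 mono s1 s2 by (auto simp: Cx_def)
qed

lemma Dx_sub_Cx: "Dx x x' \<subseteq> Cx x x'"
  unfolding Dx_def Cx_def by auto

lemma Dx_finite: "finite (Dx (x::'a::{finite,order}) x')"
proof -
  have "Dx x x' \<subseteq> vec_lambda ` (PiE UNIV (\<lambda>_. {-1, 0, 1::real}))"
  proof
    fix f assume f: "f \<in> Dx x x'"
    have "vec_nth f \<in> PiE UNIV (\<lambda>_. {-1, 0, 1::real})"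
      using f unfolding Dx_def by (auto simp: PiE_def Pi_def)
    then show "f \<in> vec_lambda ` (PiE UNIV (\<lambda>_. {-1, 0, 1::real}))"
      by (metis image_eqI vec_nth_inverse)
  qed
  moreover have "finite (vec_lambda ` (PiE UNIV (\<lambda>_. {-1, 0, 1::real})))"
    by (intro finite_imageI finite_PiE) auto
  ultimately show ?thesis by (rule finite_subset)
qed

lemma scal_top:
  fixes a b u :: real
  assumes "0 < u" "u < 1" "a \<le> 1" "b \<le> 1" "(1 - u) * a + u * b = 1"
  shows "a = 1 \<and> b = 1"
proof (rule ccontr)
  assume "\<not> (a = 1 \<and> b = 1)"
  then have "a < 1 \<or> b < 1" using assms by auto
  then have "(1 - u) * a + u * b < (1 - u) * 1 + u * 1"
  proof
    assume "a < 1"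
    then have "(1 - u) * a < (1 - u) * 1" using assms by (intro mult_strict_left_mono) auto
    moreover have "u * b \<le> u * 1" using assms by (intro mult_left_mono) auto
    ultimately show ?thesis by linarith
  next
    assume "b < 1"
    then have "u * b < u * 1" using assms by (intro mult_strict_left_mono) auto
    moreover have "(1 - u) * a \<le> (1 - u) * 1" using assms by (intro mult_left_mono) auto
    ultimately show ?thesis by linarith
  qed
  then show False using assms by simp
qed

lemma scal_zero:
  fixes a b u :: real
  assumes "0 < u" "u < 1" "0 \<le> a" "0 \<le> b" "(1 - u) * a + u * b = 0"
  shows "a = 0 \<and> b = 0"
proof -
  have "(1 - u) * a \<ge> 0" "u * b \<ge> 0" using assms by auto
  then have "(1 - u) * a = 0" "u * b = 0" using assms(5) by linarith+
  then show ?thesis using assms by auto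
qed

lemma Dx_extreme:
  fixes x x' :: "'a::{finite, distrib_lattice, bounded_lattice}"
  assumes "inf x x' = bot" and "sup x x' = top" and v: "v \<in> Dx x x'"
  shows "v extreme_point_of (Cx x x')"
  unfolding extreme_point_of_def
proof (intro conjI ballI)
  show "v \<in> Cx x x'" using v Dx_sub_Cx by blast
next
  fix a b assume a: "a \<in> Cx x x'" and b: "b \<in> Cx x x'"
  show "v \<notin> open_segment a b"
  proof
    assume "v \<in> open_segment a b"
    then obtain u where ab: "a \<noteq> b" "0 < u" "u < 1" and vu: "v = (1 - u) *\<^sub>R a + u *\<^sub>R b"
      unfolding in_segment by blast
    have "a $ j = b $ j" for j
    proof (cases "j \<in> JI")
      case False
      then show ?thesis using a b unfolding Cx_def by auto
    next
      case True
      have vj: "v $ j = (1 - u) * a $ j + u * b $ j" using vu by simp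
      have ab1: "-1 \<le> a $ j" "a $ j \<le> 1" "-1 \<le> b $ j" "b $ j \<le> 1"
        using a b True unfolding Cx_def by auto
      have "v $ j \<in> {-1, 0, 1}" using v True unfolding Dx_def by auto
      then consider "v $ j = 1" | "v $ j = 0" | "v $ j = -1" by auto
      then show ?thesis
      proof cases
        case 1
        then show ?thesis using scal_top[OF ab(2,3) ab1(2,4)] vj by auto
      next
        case 3
        have "(1 - u) * (- a $ j) + u * (- b $ j) = 1" using vj 3 by (simp add: algebra_simps)
        then show ?thesis using scal_top[OF ab(2,3), of "- a $ j" "- b $ j"] ab1 by auto
      next
        case 2
        from JI_parts[OF assms(1,2) True] show ?thesis
        proof
          assume "j \<in> eta x \<and> j \<notin> eta x'"
          then have "0 \<le> a $ j" "0 \<le> b $ j" using a b unfolding Cx_def by auto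
          moreover have "(1 - u) * a $ j + u * b $ j = 0" using vj 2 by simp
          ultimately show ?thesis using scal_zero[OF ab(2,3), of "a $ j" "b $ j"] by auto
        next
          assume "j \<in> eta x' \<and> j \<notin> eta x"
          then have "0 \<le> - a $ j" "0 \<le> - b $ j" using a b unfolding Cx_def by auto
          moreover have "(1 - u) * (- a $ j) + u * (- b $ j) = 0" using vj 2 by (simp add: algebra_simps)
          ultimately show ?thesis using scal_zero[OF ab(2,3), of "- a $ j" "- b $ j"] by auto
        qed
      qed
    qed
    then have "a = b" by (simp add: vec_eq_iff)
    then show False using ab by simp
  qed
qed

lemma scal_shift:
  fixes a m :: real
  assumes "a \<noteq> 0" "m \<le> \<bar>a\<bar>"
  shows "\<bar>a - m * sgn a\<bar> = \<bar>a\<bar> - m"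
    "a \<ge> 0 \<Longrightarrow> a - m * sgn a \<ge> 0" "a \<le> 0 \<Longrightarrow> a - m * sgn a \<le> 0"
  using assms by (cases "a > 0"; auto simp: sgn_if)+

lemma Cx_decomp:
  fixes x x' :: "'a::{finite, order}"
  shows "f \<in> Cx x x' \<Longrightarrow> f \<in> convex hull (Dx x x')"
proof (induction "card {j. f $ j \<noteq> 0}" arbitrary: f rule: less_induct)
  case less
  note f = less.prems
  let ?N = "{j. f $ j \<noteq> 0}"
  have NJI: "?N \<subseteq> JI" using f unfolding Cx_def by auto
  have fb: "\<bar>f $ j\<bar> \<le> 1" for j
    using f unfolding Cx_def by (cases "j \<in> JI") auto
  have fmono: "\<bar>f $ j'\<bar> \<le> \<bar>f $ j\<bar>" if "j \<in> JI" "j' \<in> JI" "j \<le> j'" for j j'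
    using f that unfolding Cx_def nonincr_on_JI_def by auto
  define s where "s = (\<chi> j. sgn (f $ j))"
  have sD: "s \<in> Dx x x'"
    unfolding Dx_def
  proof (intro CollectI conjI allI ballI impI)
    fix j :: 'a assume "j \<notin> JI" then have "f $ j = 0" using NJI by blast
    then show "s $ j = 0" unfolding s_def by simp
  next
    fix j :: 'a show "s $ j \<in> {-1,0,1}" unfolding s_def by (auto simp: sgn_if)
  next
    show "nonincr_on_JI (\<lambda>j. \<bar>s $ j\<bar>)"
      unfolding nonincr_on_JI_def
    proof (intro ballI impI)
      fix j j' :: 'a assume jj: "j \<in> JI" "j' \<in> JI" "j \<le> j'"
      show "\<bar>s $ j'\<bar> \<le> \<bar>s $ j\<bar>"
      proof (cases "f $ j' = 0")
        case True then show ?thesis unfolding s_def by (auto simp: sgn_if)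
      next
        case False
        then have "f $ j \<noteq> 0" using fmono[OF jj] by auto
        then show ?thesis unfolding s_def by (auto simp: sgn_if)
      qed
    qed
  next
    fix j :: 'a assume "j \<in> eta x" then show "s $ j \<ge> 0" using f unfolding s_def Cx_def by auto
  next
    fix j :: 'a assume "j \<in> eta x'" then show "s $ j \<le> 0" using f unfolding s_def Cx_def by auto
  qed
  show ?case
  proof (cases "?N = {}")
    case True
    then have z: "f $ j = 0" for j by blast
    have "f = s" unfolding s_def vec_eq_iff using z by simp
    then show ?thesis using hull_inc[OF sD] by simp
  next
    case Nne: False
    have finN: "finite ?N" by simp
    define m where "m = Min ((\<lambda>j. \<bar>f $ j\<bar>) ` ?N)"
    have "m \<in> (\<lambda>j. \<bar>f $ j\<bar>) ` ?N"
      unfolding m_def by (rule Min_in) (use finN Nne in auto)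
    then obtain j0 where j0: "f $ j0 \<noteq> 0" "m = \<bar>f $ j0\<bar>" by blast
    have mle: "m \<le> \<bar>f $ j\<bar>" if "f $ j \<noteq> 0" for j
    proof -
      have "\<bar>f $ j\<bar> \<in> (\<lambda>j. \<bar>f $ j\<bar>) ` ?N" using that by blast
      then show ?thesis unfolding m_def by (rule Min_le[rotated]) (use finN in blast)
    qed
    have m0: "0 < m" using j0 by simp
    have m1: "m \<le> 1" using j0 fb by simp
    show ?thesis
    proof (cases "m = 1")
      case True
      have "f = s"
      proof (subst vec_eq_iff, intro allI)
        fix j :: 'a show "f $ j = s $ j"
        proof (cases "f $ j = 0")
          case False
          then have "\<bar>f $ j\<bar> = 1" using mle[OF False] fb[of j] True by simp
          then have "f $ j = 1 \<or> f $ j = -1" by linarith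
          then show ?thesis unfolding s_def by auto
        qed (simp add: s_def)
      qed
      then show ?thesis using hull_inc[OF sD] by simp
    next
      case False
      then have m1': "m < 1" using m1 by simp
      define h where "h = (1 / (1 - m)) *\<^sub>R (f - m *\<^sub>R s)"
      have hj: "h $ j = (f $ j - m * sgn (f $ j)) / (1 - m)" for j
        unfolding h_def s_def by simp
      have habs: "\<bar>h $ j\<bar> = (if f $ j = 0 then 0 else (\<bar>f $ j\<bar> - m) / (1 - m))" for j
      proof (cases "f $ j = 0")
        case True then show ?thesis unfolding hj by simp
      next
        case False
        have "\<bar>h $ j\<bar> = \<bar>f $ j - m * sgn (f $ j)\<bar> / (1 - m)"
          unfolding hj using m1' by (simp add: abs_divide)
        then show ?thesis using scal_shift(1)[OF False mle[OF False]] False by simp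
      qed
      have hC: "h \<in> Cx x x'"
        unfolding Cx_def
      proof (intro CollectI conjI allI ballI impI)
        fix j :: 'a assume "j \<notin> JI" then have "f $ j = 0" using NJI by blast
        then show "h $ j = 0" unfolding hj by simp
      next
        fix j :: 'a
        have "\<bar>h $ j\<bar> \<le> 1"
        proof (cases "f $ j = 0")
          case False
          have "\<bar>f $ j\<bar> - m \<le> 1 - m" using fb[of j] by simp
          then show ?thesis using habs[of j] False m1' by (simp add: divide_le_eq_1)
        qed (simp add: habs)
        then show "-1 \<le> h $ j" "h $ j \<le> 1" by auto
      next
        show "nonincr_on_JI (\<lambda>j. \<bar>h $ j\<bar>)"
          unfolding nonincr_on_JI_def
        proof (intro ballI impI)
          fix j j' :: 'a assume jj: "j \<in> JI" "j' \<in> JI" "j \<le> j'"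
          show "\<bar>h $ j'\<bar> \<le> \<bar>h $ j\<bar>"
          proof (cases "f $ j' = 0")
            case True then show ?thesis using abs_ge_zero[of "h $ j"] by (simp add: habs[of j'])
          next
            case False
            then have "f $ j \<noteq> 0" using fmono[OF jj] by auto
            have "(\<bar>f $ j'\<bar> - m) / (1 - m) \<le> (\<bar>f $ j\<bar> - m) / (1 - m)"
              using fmono[OF jj] m1' by (intro divide_right_mono) auto
            then show ?thesis using False \<open>f $ j \<noteq> 0\<close> habs[of j] habs[of j'] by simp
          qed
        qed
      next
        fix j :: 'a assume "j \<in> eta x"
        then have ge: "f $ j \<ge> 0" using f unfolding Cx_def by auto
        show "h $ j \<ge> 0"
        proof (cases "f $ j = 0")
          case True then show ?thesis unfolding hj by simp
        next
          case False
          have "f $ j - m * sgn (f $ j) \<ge> 0" by (rule scal_shift(2)[OF False mle[OF False] ge])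
          then show ?thesis unfolding hj using m1' by (intro divide_nonneg_pos) auto
        qed
      next
        fix j :: 'a assume "j \<in> eta x'"
        then have le: "f $ j \<le> 0" using f unfolding Cx_def by auto
        show "h $ j \<le> 0"
        proof (cases "f $ j = 0")
          case True then show ?thesis unfolding hj by simp
        next
          case False
          have "f $ j - m * sgn (f $ j) \<le> 0" by (rule scal_shift(3)[OF False mle[OF False] le])
          then show ?thesis unfolding hj using m1' by (intro divide_nonpos_pos) auto
        qed
      qed
      have sub: "{j. h $ j \<noteq> 0} \<subset> ?N"
      proof
        show "{j. h $ j \<noteq> 0} \<subseteq> ?N" using hj by auto
        have "h $ j0 = 0" using habs[of j0] j0 by simp
        then show "{j. h $ j \<noteq> 0} \<noteq> ?N" using j0 by blast
      qed
      have "card {j. h $ j \<noteq> 0} < card ?N" using sub by (intro psubset_card_mono) auto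
      from less.hyps[OF this hC] have hH: "h \<in> convex hull (Dx x x')" .
      have sH: "s \<in> convex hull (Dx x x')" by (rule hull_inc[OF sD])
      have feq: "f = m *\<^sub>R s + (1 - m) *\<^sub>R h"
      proof (subst vec_eq_iff, intro allI)
        fix j :: 'a
        have ne: "1 - m \<noteq> 0" using m1' by simp
        have "(1 - m) * h $ j = f $ j - m * sgn (f $ j)" unfolding hj using ne by simp
        then show "f $ j = (m *\<^sub>R s + (1 - m) *\<^sub>R h) $ j" unfolding s_def by simp
      qed
      show ?thesis unfolding feq
        using convexD[OF convex_convex_hull sH hH, of m "1 - m"] m0 m1' by simp
    qed
  qed
qed

theorem mainTheorem5:
  fixes x x' :: "'a::{finite, distrib_lattice, bounded_lattice}"
  assumes "inf x x' = bot" and "sup x x' = top"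
  shows "convex (Cx x x') \<and> polytope (Cx x x')
         \<and> {v. v extreme_point_of (Cx x x')} = Dx x x'"
proof -
  have eq: "Cx x x' = convex hull (Dx x x')"
  proof
    show "Cx x x' \<subseteq> convex hull (Dx x x')" using Cx_decomp by blast
    show "convex hull (Dx x x') \<subseteq> Cx x x'"
      using Dx_sub_Cx Cx_convex[OF assms] by (intro hull_minimal) auto
  qed
  have "polytope (Cx x x')" unfolding polytope_def using eq Dx_finite by blast
  moreover have "{v. v extreme_point_of (Cx x x')} = Dx x x'"
  proof
    show "{v. v extreme_point_of (Cx x x')} \<subseteq> Dx x x'"
      unfolding eq by (rule extreme_points_of_convex_hull)
    show "Dx x x' \<subseteq> {v. v extreme_point_of (Cx x x')}"
      using Dx_extreme[OF assms] by blast
  qed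
  ultimately show ?thesis using Cx_convex[OF assms] by blast
qed

end
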